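(* For $r\in(0,\infty)$ let $F_r$ be the distribution function of the Student $t$ density $$f_r(x)=\frac{\Gamma((r+1)/2)}{\sqrt{\pi r}\,\Gamma(r/2)}\Big(1+\frac{x^2}{r}\Big)^{-(r+1)/2},\quad x\in\mathbb{R}.$$ Then $F_r^{-1/r}$ and $(1-F_r)^{-1/r}$ are convex on $\mathbb{R}$ (i.e. $F_r$ is bi-$s^*$-concave with $s=-1/(1+r)$, $s^*=-1/r$), and $$\gamma(F_r)=\sup_{x\in\mathbb{R}}F_r(x)(1-F_r(x))\frac{|f_r'(x)|}{f_r(x)^2}=1+\frac1r .$$ In particular, $\gamma$ of the Cauchy distribution ($r=1$) equals $2$.
   Context: Bi-$s^*$-concavity for $s\in(-1,0)$, $s^*=s/(1+s)$: both $x\mapsto F(x)^{s^*}$ and $x\mapsto(1-F(x))^{s^*}$ are convex on $\mathbb{R}$. *)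

theory Defs
  imports "HOL-Analysis.Analysis"
begin

definition student_t_density :: "real \<Rightarrow> real \<Rightarrow> real" where
  "student_t_density r x =
     Gamma ((r + 1) / 2) / (sqrt (pi * r) * Gamma (r / 2)) * (1 + x\<^sup>2 / r) powr (-(r + 1) / 2)"

definition student_t_cdf :: "real \<Rightarrow> real \<Rightarrow> real" where
  "student_t_cdf r x = (LINT t:{..x}|lborel. student_t_density r t)"

definition gamma_functional :: "(real \<Rightarrow> real) \<Rightarrow> (real \<Rightarrow> real) \<Rightarrow> real" where
  "gamma_functional F f = (SUP x. F x * (1 - F x) * \<bar>deriv f x\<bar> / (f x)\<^sup>2)"

end

theory Submission
  imports Defs "HOL-Real_Asymp.Real_Asymp"
begin


lemma nonneg_has_integral_set_integrable:
  fixes f :: "real \<Rightarrow> real"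
  assumes I: "(f has_integral I) S" and nn: "\<And>x. x\<in>S \<Longrightarrow> 0 \<le> f x"
    and S: "S \<in> sets borel" and fm: "f \<in> borel_measurable borel"
  shows "set_integrable lborel S f" "(LINT x:S|lborel. f x) = I"
proof -
  have "set_integrable lebesgue S f"
    using nonnegative_absolutely_integrable_1[of f S] I nn by (auto simp: has_integral_integrable)
  then have "integrable lebesgue (\<lambda>x. indicator S x *\<^sub>R f x)" unfolding set_integrable_def .
  moreover have "(\<lambda>x. indicator S x *\<^sub>R f x) \<in> borel_measurable lborel"
    using S fm by measurable
  ultimately show si: "set_integrable lborel S f"
    unfolding set_integrable_def using integrable_completion by blast
  show "(LINT x:S|lborel. f x) = I"
    using set_borel_integral_eq_integral(2)[OF si] I by (simp add: integral_unique)
qed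

lemma subst_identity:
  fixes r t :: real
  assumes r: "r > 0" and t: "0 < t" "t < 1"
  shows "(1 + (sqrt (r*t/(1-t)))\<^sup>2 / r) powr (-(r+1)/2) * (r / ((1-t)^2 * (2 * sqrt (r*t/(1-t)))))
         = sqrt r / 2 * (t powr (1/2 - 1) * (1-t) powr (r/2 - 1))"
proof -
  have t1: "1 - t > 0" using t by simp
  have a: "1 + (sqrt (r*t/(1-t)))\<^sup>2 / r = 1 / (1-t)"
    using r t t1 by (simp add: field_simps)
  have b: "(1/(1-t)) powr (-(r+1)/2) = (1-t) powr (r/2) * sqrt (1-t)"
  proof -
    have "(1/(1-t)) powr (-(r+1)/2) = 1 powr (-(r+1)/2) / (1-t) powr (-(r+1)/2)"
      by (rule powr_divide)
    also have "\<dots> = 1 / (1-t) powr (-((r+1)/2))" by (simp only: minus_divide_left powr_one_eq_one)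
    also have "\<dots> = (1-t) powr ((r+1)/2)"
      by (simp only: powr_minus divide_inverse mult_1_left inverse_inverse_eq)
    also have "\<dots> = (1-t) powr (r/2) * (1-t) powr (1/2)"
      by (simp add: powr_add[symmetric] add_divide_distrib)
    finally show ?thesis using t1 by (simp add: powr_half_sqrt)
  qed
  have c: "sqrt (r*t/(1-t)) = sqrt r * sqrt t / sqrt (1-t)"
    by (simp add: real_sqrt_mult real_sqrt_divide)
  have d: "t powr (1/2 - 1) = 1 / sqrt t"
  proof -
    have "t powr (1/2 - 1) = t powr (1/2) / t powr 1" by (rule powr_diff)
    also have "\<dots> = sqrt t / t" using t by (simp add: powr_half_sqrt)
    also have "\<dots> = 1 / sqrt t" using t by (simp add: field_simps)
    finally show ?thesis .
  qed
  have e: "(1-t) powr (r/2 - 1) = (1-t) powr (r/2) / (1-t)"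
    using t1 by (simp add: powr_diff)
  define P where "P = (1-t) powr (r/2)"
  define S where "S = sqrt (1-t)"
  define R where "R = sqrt r"
  define Q where "Q = sqrt t"
  have pos: "S > 0" "R > 0" "Q > 0" using t t1 r by (auto simp: S_def R_def Q_def)
  have sq: "1 - t = S*S" "r = R*R" using t1 r by (simp_all add: S_def R_def)
  have key: "(P*S) * (R*R / ((S*S)^2 * (2*(R*Q/S)))) = R/2 * (1/Q * (P/(S*S)))"
    using pos by (simp add: field_simps power2_eq_square)
  show ?thesis unfolding a b unfolding c d e P_def[symmetric] S_def[symmetric] R_def[symmetric]
      Q_def[symmetric] unfolding sq using key by simp
qed

lemma half_integral:
  fixes r :: real assumes r: "r > 0"
  shows "set_integrable lborel {0<..} (\<lambda>x. (1 + x\<^sup>2/r) powr (-(r+1)/2))"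
    "(LBINT x=0..\<infinity>. (1 + x\<^sup>2/r) powr (-(r+1)/2)) = sqrt r / 2 * Beta (1/2) (r/2)"
proof -
  define f0 where "f0 = (\<lambda>x::real. (1 + x\<^sup>2/r) powr (-(r+1)/2))"
  define h where "h = (\<lambda>t::real. sqrt (r*t/(1-t)))"
  define h' where "h' = (\<lambda>t::real. r / ((1-t)^2 * (2 * sqrt (r*t/(1-t)))))"
  define beta where "beta = (\<lambda>t::real. t powr (1/2 - 1) * (1-t) powr (r/2 - 1))"
  have E01: "einterval 0 1 = {0<..<(1::real)}" by (auto simp: einterval_def)
  have E0i: "einterval 0 \<infinity> = ({0<..}::real set)" by (auto simp: einterval_def)
  have bI: "(beta has_integral Beta (1/2) (r/2)) {0<..<1}"
    using has_integral_Beta_real[of "1/2" "r/2"] r unfolding beta_def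
    by (simp add: has_integral_Icc_iff_Ioo)
  have bm: "beta \<in> borel_measurable borel" unfolding beta_def by measurable
  have bnn: "\<And>t. t \<in> {0<..<1} \<Longrightarrow> 0 \<le> beta t" unfolding beta_def by simp
  have Sb: "{0<..<1::real} \<in> sets borel" by simp
  note bS = nonneg_has_integral_set_integrable[OF bI bnn Sb bm]
  have fg: "\<And>t. t \<in> {0<..<1} \<Longrightarrow> f0 (h t) * h' t = sqrt r / 2 * beta t"
    unfolding f0_def h_def h'_def beta_def using subst_identity r by auto
  have fgI: "set_integrable lborel (einterval 0 1) (\<lambda>t. f0 (h t) * h' t)"
  proof -
    have "set_integrable lborel {0<..<1} (\<lambda>t. sqrt r/2 * beta t)"
      using bS(1) by (rule set_integrable_mult_right)
    moreover have "set_integrable lborel {0<..<1} (\<lambda>t. f0 (h t) * h' t) = set_integrable lborel {0<..<1} (\<lambda>t. sqrt r/2*beta t)"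
      by (rule set_integrable_cong) (auto simp: fg)
    ultimately show ?thesis unfolding E01 by simp
  qed
  have fgV: "(LBINT t=0..1. f0 (h t) * h' t) = sqrt r / 2 * Beta (1/2) (r/2)"
  proof -
    have "(LBINT t=0..1. f0 (h t) * h' t) = (LBINT t:{0<..<1}. f0 (h t) * h' t)"
      by (simp add: interval_lebesgue_integral_def E01)
    also have "\<dots> = (LBINT t:{0<..<1}. sqrt r / 2 * beta t)"
      by (rule set_lebesgue_integral_cong) (auto simp: fg)
    also have "\<dots> = sqrt r / 2 * Beta (1/2) (r/2)"
      using bS(2) by (simp add: set_integral_mult_right)
    finally show ?thesis .
  qed
  have deriv: "\<And>x. 0 < ereal x \<Longrightarrow> ereal x < 1 \<Longrightarrow> DERIV h x :> h' x"
  proof -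
    fix x assume "0 < ereal x" "ereal x < 1"
    then have x: "0 < x" "x < 1" by auto
    have p: "r*x/(1-x) > 0" using x r by auto
    have d1: "((\<lambda>t. r*t/(1-t)) has_real_derivative r/(1-x)^2) (at x)"
      using x by (auto intro!: derivative_eq_intros simp: field_simps power2_eq_square)
    have d2: "DERIV sqrt (r*x/(1-x)) :> inverse (sqrt (r*x/(1-x))) / 2"
      by (rule DERIV_real_sqrt) (rule p)
    have "DERIV (\<lambda>t. sqrt (r*t/(1-t))) x :> inverse (sqrt (r*x/(1-x))) / 2 * (r/(1-x)^2)"
      using DERIV_chain2[OF d2 d1] by simp
    moreover have "inverse (sqrt (r*x/(1-x))) / 2 * (r/(1-x)^2) = h' x"
      unfolding h'_def using x p by (simp add: field_simps)
    ultimately show "DERIV h x :> h' x" unfolding h_def by simp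
  qed
  have contf: "\<And>y. isCont f0 y"
  proof -
    fix y :: real
    have "1 + y\<^sup>2/r > 0" using r by (simp add: add_pos_nonneg)
    then show "isCont f0 y" unfolding f0_def using r by (intro continuous_intros) auto
  qed
  have contg': "\<And>x. 0 < ereal x \<Longrightarrow> ereal x < 1 \<Longrightarrow> isCont h' x"
  proof -
    fix x assume "0 < ereal x" "ereal x < 1"
    then have x: "0 < x" "x < 1" by auto
    have p: "r*x/(1-x) > 0" using x r by auto
    show "isCont h' x" unfolding h'_def
      by (intro continuous_intros) (use x p in auto)
  qed
  have fnn: "\<And>y. 0 \<le> f0 y" unfolding f0_def by simp
  have g'nn: "\<And>x. 0 \<le> ereal x \<Longrightarrow> ereal x \<le> 1 \<Longrightarrow> 0 \<le> h' x"
  proof -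
    fix x assume "0 \<le> ereal x" "ereal x \<le> 1"
    then have x: "0 \<le> x" "x \<le> 1" by auto
    show "0 \<le> h' x" unfolding h'_def using x r by (auto intro!: divide_nonneg_nonneg mult_nonneg_nonneg)
  qed
  have A: "((ereal \<circ> h \<circ> real_of_ereal) \<longlongrightarrow> 0) (at_right 0)"
  proof -
    have "(h \<longlongrightarrow> 0) (at_right 0)" unfolding h_def
      by (rule tendsto_eq_intros refl | simp)+
    then show ?thesis unfolding zero_ereal_def ereal_tendsto_simps by (simp add: comp_def)
  qed
  have B: "((ereal \<circ> h \<circ> real_of_ereal) \<longlongrightarrow> \<infinity>) (at_left 1)"
  proof -
    have "filterlim h at_top (at_left 1)" unfolding h_def using r by real_asymp
    then show ?thesis unfolding one_ereal_def ereal_tendsto_simps by (simp add: comp_def)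
  qed
  note S = interval_integral_substitution_nonneg[where a=0 and b=1 and g=h and g'=h' and f=f0
      and A=0 and B=\<infinity>, OF _ deriv contf contg' fnn g'nn A B fgI]
  show "set_integrable lborel {0<..} (\<lambda>x. (1 + x\<^sup>2/r) powr (-(r+1)/2))"
    using S(1) unfolding E0i f0_def by simp
  show "(LBINT x=0..\<infinity>. (1 + x\<^sup>2/r) powr (-(r+1)/2)) = sqrt r / 2 * Beta (1/2) (r/2)"
    using S(2) fgV unfolding f0_def by simp
qed

lemma convex_powr_neg:
  fixes g g' g'' :: "real \<Rightarrow> real" and p :: real
  assumes p: "p < 0" and d1: "\<And>x. (g has_real_derivative g' x) (at x)"
    and d2: "\<And>x. (g' has_real_derivative g'' x) (at x)"
    and pos: "\<And>x. g x > 0" and cond: "\<And>x. (p - 1) * (g' x)\<^sup>2 + g x * g'' x \<le> 0"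
  shows "convex_on UNIV (\<lambda>x. g x powr p)"
proof (rule convex_on_realI[where f' = "\<lambda>x. p * (g x powr (p - 1) * g' x)"])
  show "connected (UNIV::real set)" by simp
next
  fix x :: real
  show "((\<lambda>x. g x powr p) has_real_derivative p * (g x powr (p-1) * g' x)) (at x)"
    using DERIV_fun_powr[OF d1 pos, of p] by (simp add: mult.assoc)
next
  fix x y :: real assume xy: "x \<le> y"
  show "p * (g x powr (p-1) * g' x) \<le> p * (g y powr (p-1) * g' y)"
  proof (rule DERIV_nonneg_imp_nondecreasing[OF xy])
    fix t :: real
    have D: "DERIV (\<lambda>x. p * (g x powr (p-1) * g' x)) t :>
       p * ((p - 1) * g t powr (p - 1 - 1) * g' t * g' t + g'' t * g t powr (p - 1))"
      using DERIV_cmult[OF DERIV_mult[OF DERIV_fun_powr[OF d1 pos, of "p-1"] d2], of p] by simp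
    have e: "g t powr (p - 1) = g t powr (p - 1 - 1) * g t"
  proof -
    have "g t powr (p - 1 - 1) * g t = g t powr (p - 1 - 1) * g t powr 1" using pos[of t] by simp
    also have "\<dots> = g t powr (p - 1 - 1 + 1)" by (rule powr_add[symmetric])
    finally show ?thesis by simp
  qed
    have "p * ((p - 1) * g t powr (p - 1 - 1) * g' t * g' t + g'' t * g t powr (p - 1))
        = p * (g t powr (p - 1 - 1) * ((p - 1) * (g' t)\<^sup>2 + g t * g'' t))"
      unfolding e by (simp add: algebra_simps power2_eq_square)
    also have "\<dots> \<ge> 0"
      using p cond[of t] pos[of t]
      by (intro mult_nonpos_nonpos) (auto intro: mult_nonneg_nonpos)
    finally show "\<exists>y. DERIV (\<lambda>x. p * (g x powr (p-1) * g' x)) t :> y \<and> y \<ge> 0"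
      using D by blast
  qed
qed



definition tc :: "real \<Rightarrow> real" where
  "tc r = Gamma ((r + 1) / 2) / (sqrt (pi * r) * Gamma (r / 2))"

lemma density_eq: "student_t_density r x = tc r * (1 + x\<^sup>2 / r) powr (-(r + 1) / 2)"
  by (simp add: student_t_density_def tc_def)

context fixes r :: real assumes r: "r > 0"
begin

abbreviation "f \<equiv> student_t_density r"
abbreviation "F \<equiv> student_t_cdf r"

lemma tc_pos: "tc r > 0"
  using r by (simp add: tc_def)

lemma u_pos: "1 + x\<^sup>2 / r > 0"
  using r by (simp add: add_pos_nonneg)

lemma f_pos: "f x > 0"
  using tc_pos u_pos[of x] by (simp add: density_eq)

lemma f_even: "f (-x) = f x"
  by (simp add: density_eq)

lemma f_cont: "isCont f x"
  unfolding density_eq by (intro continuous_intros) (use u_pos[of x] r in auto)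

lemma f_cont_on: "continuous_on A f"
  using f_cont by (simp add: continuous_at_imp_continuous_on)

lemma f_meas: "f \<in> borel_measurable borel"
  using f_cont_on by (intro borel_measurable_continuous_onI)

definition "fd x = -(r+1)/r * x / (1 + x\<^sup>2/r) * f x"

lemma f_deriv: "DERIV f x :> fd x"
proof -
  have "DERIV (\<lambda>x. 1 + x\<^sup>2/r) x :> 2*x/r"
    using r by (auto intro!: derivative_eq_intros)
  from DERIV_fun_powr[OF this u_pos, of "-(r+1)/2"]
  have d: "DERIV (\<lambda>x. (1 + x\<^sup>2/r) powr (-(r+1)/2)) x :>
      -(r+1)/2 * (1 + x\<^sup>2/r) powr (-(r+1)/2 - 1) * (2*x/r)" by simp
  have e: "(1 + x\<^sup>2/r) powr (-(r+1)/2 - 1) = (1 + x\<^sup>2/r) powr (-(r+1)/2) / (1 + x\<^sup>2/r)"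
    using u_pos[of x] by (simp add: powr_diff)
  have fe: "f = (\<lambda>x. tc r * (1 + x\<^sup>2 / r) powr (-(r + 1) / 2))" by (rule ext) (rule density_eq)
  have eq: "tc r * (-(r+1)/2 * (1 + x\<^sup>2/r) powr (-(r+1)/2 - 1) * (2*x/r)) = fd x"
  proof -
    have g: "\<And>P U. U > 0 \<Longrightarrow> tc r * (-(r+1)/2 * (P/U) * (2*x/r)) = -(r+1)/r * x / U * (tc r * P)"
      using r by (simp add: field_simps)
    show ?thesis unfolding e fd_def density_eq by (rule g) (rule u_pos)
  qed
  show ?thesis unfolding fe using DERIV_cmult[OF d, of "tc r"] unfolding eq .
qed

lemma deriv_f: "deriv f x = fd x"
  using f_deriv by (rule DERIV_imp_deriv)

lemma int_pos: "set_integrable lborel {0<..} f" "(LBINT x=0..\<infinity>. f x) = 1/2"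
proof -
  note H = half_integral[OF r]
  show "set_integrable lborel {0<..} f"
    unfolding density_eq using H(1) by (rule set_integrable_mult_right)
  have "(LBINT x=0..\<infinity>. f x) = tc r * (sqrt r / 2 * Beta (1/2) (r/2))"
    unfolding density_eq using H(2) by simp
  also have "\<dots> = 1/2"
  proof -
    have "Beta (1/2) (r/2) = sqrt pi * Gamma (r/2) / Gamma ((r+1)/2)"
      by (simp add: Beta_def Gamma_one_half_real add_divide_distrib add.commute)
    moreover have "sqrt (pi * r) = sqrt pi * sqrt r" by (simp add: real_sqrt_mult)
    ultimately have "tc r * (sqrt r / 2 * Beta (1/2) (r/2)) = 
      Gamma ((r+1)/2) / (sqrt pi * sqrt r * Gamma (r/2)) * (sqrt r / 2 * (sqrt pi * Gamma (r/2) / Gamma ((r+1)/2)))"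
      unfolding tc_def by simp
    moreover have "\<And>a b c d::real. a>0 \<Longrightarrow> b>0 \<Longrightarrow> c>0 \<Longrightarrow> d>0 \<Longrightarrow> (a/(b*c*d))*(c/2*(b*d/a)) = 1/2"
      by (simp add: field_simps)
    moreover have "Gamma (r/2) > 0" "Gamma ((r+1)/2) > 0" "sqrt pi > 0" "sqrt r > 0" using r by auto
    ultimately show ?thesis by simp
  qed
  finally show "(LBINT x=0..\<infinity>. f x) = 1/2" .
qed

lemma int_neg: "set_integrable lborel {..<0} f" "(LBINT x=-\<infinity>..0. f x) = 1/2"
proof -
  have "interval_lebesgue_integrable lborel 0 \<infinity> (\<lambda>x. f (-x))"
    using int_pos(1) by (simp add: f_even interval_lebesgue_integral_0_infty)
  then have "interval_lebesgue_integrable lborel (-\<infinity>) 0 f"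
    using interval_integrable_mirror[of 0 "\<infinity>" f] by simp
  then show "set_integrable lborel {..<0} f"
    by (simp add: interval_lebesgue_integrable_def zero_ereal_def)
  have "(LBINT x=-\<infinity>..0. f x) = (LBINT x=-0..-(-\<infinity>). f (-x))"
    by (rule interval_integral_reflect)
  also have "\<dots> = (LBINT x=0..\<infinity>. f x)" by (simp add: f_even)
  finally show "(LBINT x=-\<infinity>..0. f x) = 1/2" using int_pos(2) by simp
qed

lemma int_all: "set_integrable lborel UNIV f"
proof -
  have "set_integrable lborel {0..1} f"
    by (rule borel_integrable_atLeastAtMost') (rule f_cont_on)
  then have "set_integrable lborel ({..<0} \<union> {0..1}) f"
    using set_integrable_Un[OF int_neg(1)] by auto
  then have "set_integrable lborel (({..<0} \<union> {0..1}) \<union> {0<..}) f"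
    using set_integrable_Un[OF _ int_pos(1)] by auto
  moreover have "({..<0} \<union> {0..1}) \<union> {0<..} = (UNIV::real set)" by auto
  ultimately show ?thesis by simp
qed

lemma int_any: "set_integrable lborel A f" if "A \<in> sets borel"
  using set_integrable_subset[OF int_all] that by auto

lemma int_any': "interval_lebesgue_integrable lborel a b f"
  unfolding interval_lebesgue_integrable_def by (auto intro!: int_any)

lemma F_formula: "F x = 1/2 + (LBINT t=0..x. f t)"
proof -
  have "F x = (LBINT t:{..<x}. f t)"
    unfolding student_t_cdf_def
    by (rule set_integral_discrete_difference[where X="{x}"]) auto
  also have "\<dots> = (LBINT t=-\<infinity>..x. f t)"
    by (simp add: interval_lebesgue_integral_def)
  also have "\<dots> = (LBINT t=-\<infinity>..0. f t) + (LBINT t=0..x. f t)"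
    by (rule interval_integral_sum[symmetric]) (rule int_any')
  finally show ?thesis using int_neg(2) by simp
qed

lemma G_formula: "1 - F x = (LBINT t=x..\<infinity>. f t)"
proof -
  have "(LBINT t=0..x. f t) + (LBINT t=x..\<infinity>. f t) = (LBINT t=0..\<infinity>. f t)"
    by (rule interval_integral_sum) (rule int_any')
  then show ?thesis using int_pos(2) F_formula[of x] by simp
qed

lemma F_deriv: "DERIV F x :> f x"
proof -
  have "((\<lambda>u. LBINT y=ereal 0..ereal u. f y) has_vector_derivative f x) (at x within {-\<bar>x\<bar>-1..\<bar>x\<bar>+1})"
    by (rule interval_integral_FTC2) (auto intro: f_cont_on)
  then have "((\<lambda>u. LBINT y=0..u. f y) has_vector_derivative f x) (at x within {-\<bar>x\<bar>-1..\<bar>x\<bar>+1})"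
    by (simp add: zero_ereal_def)
  then have "((\<lambda>u. LBINT y=0..u. f y) has_vector_derivative f x) (at x)"
    by (subst (asm) at_within_Icc_at) auto
  then have "DERIV (\<lambda>u. LBINT y=0..u. f y) x :> f x"
    by (simp add: has_real_derivative_iff_has_vector_derivative)
  then have "DERIV (\<lambda>u. 1/2 + (LBINT y=0..u. f y)) x :> f x"
    by (auto intro!: derivative_eq_intros)
  moreover have "F = (\<lambda>u. 1/2 + (LBINT y=0..u. f y))" by (rule ext) (rule F_formula)
  ultimately show ?thesis by simp
qed

lemma F_sym: "F (-x) = 1 - F x"
proof -
  have "\<forall>x. DERIV (\<lambda>x. F x + F (-x)) x :> 0"
  proof
    fix x
    show "DERIV (\<lambda>x. F x + F (-x)) x :> 0"
      using DERIV_add[OF F_deriv[of x] DERIV_chain2[OF F_deriv[of "-x"] DERIV_minus[OF DERIV_ident]]]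
      by (simp add: f_even)
  qed
  from DERIV_isconst_all[OF this, of x 0] show ?thesis using F_formula[of 0] by (simp add: zero_ereal_def)
qed

lemma F_mono: "x \<le> y \<Longrightarrow> F x \<le> F y"
  by (rule DERIV_nonneg_imp_nondecreasing[of x y F]) (auto intro: F_deriv less_imp_le[OF f_pos])


lemma M_lim: "((\<lambda>t. t * f t) \<longlongrightarrow> 0) at_top"
proof (rule tendsto_sandwich[where f="\<lambda>_. 0" and h="\<lambda>t. tc r * r powr ((r+1)/2) * t powr (-r)"])
  show "\<forall>\<^sub>F t in at_top. 0 \<le> t * f t"
    using eventually_ge_at_top[of 0] by eventually_elim (metis f_pos less_imp_le mult_nonneg_nonneg)
  show "\<forall>\<^sub>F t in at_top. t * f t \<le> tc r * r powr ((r+1)/2) * t powr (-r)"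
    using eventually_ge_at_top[of 1]
  proof eventually_elim
    case (elim t)
    then have t: "t > 0" by simp
    have "(1 + t\<^sup>2/r) powr (-(r+1)/2) \<le> (t\<^sup>2/r) powr (-(r+1)/2)"
      using r t by (auto intro!: powr_mono2')
    also have "\<dots> = t powr (-(r+1)) * r powr ((r+1)/2)"
    proof -
      have ex: "(-(r+1)/2) * ln (t*t/r) = -(r+1) * ln t + (r+1)/2 * ln r"
        using r t by (simp add: ln_div ln_mult field_simps)
      have "(t\<^sup>2/r) powr (-(r+1)/2) = exp (-(r+1) * ln t + (r+1)/2 * ln r)"
        using r t ex by (simp add: powr_def power2_eq_square)
      also have "\<dots> = t powr (-(r+1)) * r powr ((r+1)/2)"
        using r t by (simp add: exp_add powr_def)
      finally show ?thesis .
    qed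
    finally have b: "(1 + t\<^sup>2/r) powr (-(r+1)/2) \<le> t powr (-(r+1)) * r powr ((r+1)/2)" .
    have tt: "t * t powr (-(r+1)) = t powr (-r)"
    proof -
      have "t * t powr (-(r+1)) = t powr 1 * t powr (-(r+1))" using t by simp
      also have "\<dots> = t powr (1 + -(r+1))" by (rule powr_add[symmetric])
      finally show ?thesis by simp
    qed
    have "t * f t = tc r * (t * (1 + t\<^sup>2/r) powr (-(r+1)/2))" by (simp add: density_eq)
    also have "\<dots> \<le> tc r * (t * (t powr (-(r+1)) * r powr ((r+1)/2)))"
      using b t tc_pos by (intro mult_left_mono) auto
    also have "\<dots> = tc r * r powr ((r+1)/2) * t powr (-r)"
      using tt by (simp add: algebra_simps)
    finally show ?case .
  qed
  show "((\<lambda>t. tc r * r powr ((r+1)/2) * t powr (-r)) \<longlongrightarrow> 0) at_top"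
    using r by (intro tendsto_mult_right_zero tendsto_neg_powr filterlim_ident) auto
qed auto

definition "kk x = (1 + x\<^sup>2/r) * f x / x"

lemma kk_lim: "(kk \<longlongrightarrow> 0) at_top"
proof -
  have "((\<lambda>t. (1/t\<^sup>2 + 1/r) * (t * f t)) \<longlongrightarrow> (0 + 1/r) * 0) at_top"
    by (intro tendsto_intros M_lim) real_asymp
  moreover have "\<forall>\<^sub>F t in at_top. (1/t\<^sup>2 + 1/r) * (t * f t) = kk t"
    using eventually_gt_at_top[of 0]
    by eventually_elim (use r in \<open>simp add: kk_def field_simps power2_eq_square\<close>)
  ultimately show ?thesis by (simp add: tendsto_cong)
qed

lemma kk_deriv: "t > 0 \<Longrightarrow> DERIV kk t :> - (f t * (1 + 1/t\<^sup>2))"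
proof -
  assume t: "t > 0"
  have kf: "kk = (\<lambda>x. (1 + x\<^sup>2/r) * f x / x)" by (rule ext) (simp add: kk_def)
  have du: "DERIV (\<lambda>x. 1 + x\<^sup>2/r) t :> 2*t/r"
    using r by (auto intro!: derivative_eq_intros)
  have D: "DERIV kk t :> (((2*t/r) * f t + fd t * (1 + t\<^sup>2/r)) * t - (1 + t\<^sup>2/r) * f t * 1) / (t * t)"
    unfolding kf using DERIV_divide[OF DERIV_mult[OF du f_deriv] DERIV_ident] t by simp
  have h: "fd t * (1 + t\<^sup>2/r) = -(r+1)/r*t * f t"
    unfolding fd_def using u_pos[of t] by simp
  have "(((2*t/r) * f t + fd t * (1 + t\<^sup>2/r)) * t - (1 + t\<^sup>2/r) * f t * 1) / (t * t)
      = - (f t * (1 + 1/t\<^sup>2))"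
    unfolding h using r t by (simp add: field_simps power2_eq_square)
  then show ?thesis using D by simp
qed

lemma G_upper: assumes x: "x > 0" shows "1 - F x \<le> (1 + x\<^sup>2/r) * f x / x"
proof -
  define psi where "psi = (\<lambda>t. f t * (1 + 1/t\<^sup>2))"
  have kkx: "kk x = (1 + x\<^sup>2/r) * f x / x" by (simp add: kk_def)
  have deriv: "\<And>t. ereal x < ereal t \<Longrightarrow> ereal t < \<infinity> \<Longrightarrow> DERIV (\<lambda>t. - kk t) t :> psi t"
  proof -
    fix t assume "ereal x < ereal t" "ereal t < \<infinity>"
    then have t: "t > 0" using x by simp
    show "DERIV (\<lambda>t. - kk t) t :> psi t"
      using DERIV_minus[OF kk_deriv[OF t]] by (simp add: psi_def)
  qed
  have cont: "\<And>t. ereal x < ereal t \<Longrightarrow> ereal t < \<infinity> \<Longrightarrow> isCont psi t"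
  proof -
    fix t assume "ereal x < ereal t" "ereal t < \<infinity>"
    then have t: "t > 0" using x by simp
    show "isCont psi t" unfolding psi_def by (intro continuous_intros f_cont) (use t in auto)
  qed
  have nn: "AE t in lborel. ereal x < ereal t \<longrightarrow> ereal t < \<infinity> \<longrightarrow> 0 \<le> psi t"
    by (intro AE_I2) (auto simp: psi_def intro!: mult_nonneg_nonneg less_imp_le[OF f_pos] add_nonneg_nonneg)
  have kcont: "isCont kk x"
  proof -
    have "isCont (\<lambda>x. (1 + x\<^sup>2/r) * f x / x) x" by (intro continuous_intros f_cont) (use x r in auto)
    then show ?thesis by (simp add: kk_def[abs_def])
  qed
  have A: "(((\<lambda>t. - kk t) \<circ> real_of_ereal) \<longlongrightarrow> - kk x) (at_right (ereal x))"
    unfolding ereal_tendsto_simps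
    using tendsto_minus[OF kcont[unfolded isCont_def]] by (rule tendsto_mono[OF at_le, rotated]) simp
  have B: "(((\<lambda>t. - kk t) \<circ> real_of_ereal) \<longlongrightarrow> 0) (at_left \<infinity>)"
    unfolding ereal_tendsto_simps using tendsto_minus[OF kk_lim] by simp
  note FTC = interval_integral_FTC_nonneg[where a="ereal x" and b=\<infinity>, OF _ deriv cont nn A B]
  have "1 - F x = (LBINT t:{x<..}. f t)" using G_formula interval_integral_to_infinity_eq by simp
  also have "\<dots> \<le> (LBINT t:{x<..}. psi t)"
  proof (rule set_integral_mono)
    show "set_integrable lborel {x<..} f" by (rule int_any) simp
    show "set_integrable lborel {x<..} psi" using FTC(1) by simp
    fix t assume "t \<in> {x<..}"
    show "f t \<le> psi t" unfolding psi_def using f_pos[of t] by (simp add: add_increasing2)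
  qed
  also have "\<dots> = kk x" using FTC(2) interval_integral_to_infinity_eq[of lborel x psi] by simp
  finally show ?thesis using kkx by simp
qed

lemma G_lower: assumes x: "x \<ge> 1" shows "1 - F x \<ge> x * f x / r"
proof -
  define chi where "chi = (\<lambda>t. f t * (t\<^sup>2 - 1) / (r + t\<^sup>2))"
  define phi where "phi = (\<lambda>t. - (t * f t) / r)"
  have deriv: "\<And>t. ereal x < ereal t \<Longrightarrow> ereal t < \<infinity> \<Longrightarrow> DERIV phi t :> chi t"
  proof -
    fix t assume "ereal x < ereal t" "ereal t < \<infinity>"
    then have t: "t > 0" using x by simp
    have D: "DERIV phi t :> - (1 * f t + fd t * t) / r"
      unfolding phi_def by (intro DERIV_cdivide DERIV_minus DERIV_mult DERIV_ident f_deriv)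
    have h: "fd t * t = -(r+1) * t\<^sup>2 * f t / (r + t\<^sup>2)"
    proof -
      have uu: "1 + t\<^sup>2/r = (r + t\<^sup>2)/r" using r by (simp add: field_simps)
      have S: "r + t\<^sup>2 > 0" using r by (simp add: add_pos_nonneg)
      have g: "\<And>S F0. S > 0 \<Longrightarrow> -(r+1)/r * t / (S/r) * F0 * t = -(r+1)*t\<^sup>2*F0/S"
        using r by (simp add: field_simps power2_eq_square)
      show ?thesis unfolding fd_def uu by (rule g) (rule S)
    qed
    have S: "r + t\<^sup>2 > 0" using r by (simp add: add_pos_nonneg)
    have g: "\<And>S F0. S > 0 \<Longrightarrow> -(1*F0 + -(r+1)*t\<^sup>2*F0/S)/r = F0*((r+1)*t\<^sup>2 - S)/(r*S)"
      using r by (simp add: field_simps)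
    have g2: "f t*((r+1)*t\<^sup>2 - (r + t\<^sup>2))/(r*(r + t\<^sup>2)) = f t * (t\<^sup>2 - 1) / (r + t\<^sup>2)"
    proof -
      have e: "(r+1)*t\<^sup>2 - (r + t\<^sup>2) = r*(t\<^sup>2-1)" by (simp add: algebra_simps)
      have q: "\<And>A B S. S > 0 \<Longrightarrow> A*(r*B)/(r*S) = A*B/S" using r by simp
      show ?thesis unfolding e by (rule q) (rule S)
    qed
    have "- (1 * f t + fd t * t) / r = chi t"
      unfolding h chi_def using g[OF S, of "f t"] g2 by simp
    then show "DERIV phi t :> chi t" using D by simp
  qed
  have cont: "\<And>t. ereal x < ereal t \<Longrightarrow> ereal t < \<infinity> \<Longrightarrow> isCont chi t"
  proof -
    fix t assume "ereal x < ereal t" "ereal t < \<infinity>"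
    then have t: "t > 0" using x by simp
    have "r + t\<^sup>2 > 0" using r by (simp add: add_pos_nonneg)
    then show "isCont chi t" unfolding chi_def by (intro continuous_intros f_cont) auto
  qed
  have nn: "AE t in lborel. ereal x < ereal t \<longrightarrow> ereal t < \<infinity> \<longrightarrow> 0 \<le> chi t"
  proof (intro AE_I2 impI)
    fix t assume "ereal x < ereal t"
    then have t: "t > 1" using x by simp
    then have "t\<^sup>2 - 1 \<ge> 0" by (simp add: one_le_power)
    moreover have "r + t\<^sup>2 > 0" using r by (simp add: add_pos_nonneg)
    ultimately show "0 \<le> chi t" unfolding chi_def
      by (intro divide_nonneg_pos mult_nonneg_nonneg less_imp_le[OF f_pos]) auto
  qed
  have pcont: "isCont phi x" unfolding phi_def by (intro continuous_intros f_cont) (use r in auto)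
  have A: "((phi \<circ> real_of_ereal) \<longlongrightarrow> phi x) (at_right (ereal x))"
    unfolding ereal_tendsto_simps
    using pcont[unfolded isCont_def] by (rule tendsto_mono[OF at_le, rotated]) simp
  have B: "((phi \<circ> real_of_ereal) \<longlongrightarrow> 0) (at_left \<infinity>)"
    unfolding ereal_tendsto_simps phi_def using tendsto_divide[OF tendsto_minus[OF M_lim] tendsto_const[of r]] using r by simp
  note FTC = interval_integral_FTC_nonneg[where a="ereal x" and b=\<infinity>, OF _ deriv cont nn A B]
  have "x * f x / r = (LBINT t:{x<..}. chi t)"
    using FTC(2) interval_integral_to_infinity_eq[of lborel x chi] by (simp add: phi_def)
  also have "\<dots> \<le> (LBINT t:{x<..}. f t)"
  proof (rule set_integral_mono)
    show "set_integrable lborel {x<..} f" by (rule int_any) simp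
    show "set_integrable lborel {x<..} chi" using FTC(1) by simp
    fix t assume "t \<in> {x<..}"
    have "r + t\<^sup>2 > 0" using r by (simp add: add_pos_nonneg)
    then have "(t\<^sup>2 - 1) / (r + t\<^sup>2) \<le> 1" using r by simp
    then have "f t * ((t\<^sup>2 - 1) / (r + t\<^sup>2)) \<le> f t * 1"
      using f_pos[of t] by (intro mult_left_mono) auto
    then show "chi t \<le> f t" unfolding chi_def by simp
  qed
  also have "\<dots> = 1 - F x" using G_formula[of x] interval_integral_to_infinity_eq[of lborel x f] by simp
  finally show ?thesis .
qed

lemma G_pos: "1 - F x > 0"
proof (cases "x \<ge> 1")
  case True
  have "0 < x * f x / r" using True f_pos[of x] r by simp
  also have "\<dots> \<le> 1 - F x" using G_lower[OF True] .
  finally show ?thesis .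
next
  case False
  have "0 < f 1 / r" using f_pos[of 1] r by simp
  then have "0 < 1 - F 1" using G_lower[of 1] by simp
  also have "\<dots> \<le> 1 - F x" using F_mono[of x 1] False by simp
  finally show ?thesis .
qed

lemma F_pos: "F x > 0"
  using G_pos[of "-x"] F_sym[of "-x"] by simp

lemma F_upper_neg: assumes x: "x < 0" shows "F x \<le> (1 + x\<^sup>2/r) * f x / (-x)"
  using G_upper[of "-x"] x F_sym[of "-x"] f_even[of x] by simp

lemma convex_G: "convex_on UNIV (\<lambda>x. (1 - F x) powr (-1/r))"
proof (rule convex_powr_neg[where g'="\<lambda>x. - f x" and g''="\<lambda>x. - fd x"])
  show "-1/r < 0" using r by simp
  fix x :: real
  show "((\<lambda>x. 1 - F x) has_real_derivative - f x) (at x)"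
    using DERIV_diff[OF DERIV_const F_deriv] by simp
  show "((\<lambda>x. - f x) has_real_derivative - fd x) (at x)"
    using DERIV_minus[OF f_deriv] by simp
  show "1 - F x > 0" by (rule G_pos)
  have g: "\<And>U F0 Gv. U > 0 \<Longrightarrow> (-1/r - 1) * (- F0)\<^sup>2 + Gv * (- (-(r+1)/r * x / U * F0))
      = (r+1)/r * F0 * (x*Gv/U - F0)"
    using r by (simp add: field_simps power2_eq_square)
  have le: "x * (1 - F x) / (1 + x\<^sup>2/r) \<le> f x"
  proof (cases "x > 0")
    case True
    have "x * (1 - F x) \<le> (1 + x\<^sup>2/r) * f x"
      using G_upper[OF True] True by (simp add: pos_le_divide_eq mult.commute)
    then show ?thesis using u_pos[of x] by (simp add: pos_divide_le_eq mult.commute)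
  next
    case False
    then have "x * (1 - F x) \<le> 0" using G_pos[of x] by (simp add: mult_nonpos_nonneg)
    then have "x * (1 - F x) / (1 + x\<^sup>2/r) \<le> 0" using u_pos[of x] by (simp add: divide_nonpos_pos)
    then show ?thesis using f_pos[of x] by simp
  qed
  have "(r+1)/r * f x * (x*(1 - F x)/(1 + x\<^sup>2/r) - f x) \<le> 0"
    using le r f_pos[of x] by (intro mult_nonneg_nonpos) auto
  then show "(-1/r - 1) * (- f x)\<^sup>2 + (1 - F x) * (- fd x) \<le> 0"
    unfolding fd_def using g[OF u_pos[of x], of "f x" "1 - F x"] by simp
qed

lemma convex_F: "convex_on UNIV (\<lambda>x. F x powr (-1/r))"
proof (rule convex_powr_neg[where g'="f" and g''="fd"])
  show "-1/r < 0" using r by simp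
  fix x :: real
  show "(F has_real_derivative f x) (at x)" by (rule F_deriv)
  show "(f has_real_derivative fd x) (at x)" by (rule f_deriv)
  show "F x > 0" by (rule F_pos)
  have g: "\<And>U F0 Gv. U > 0 \<Longrightarrow> (-1/r - 1) * F0\<^sup>2 + Gv * (-(r+1)/r * x / U * F0)
      = (r+1)/r * F0 * (-x*Gv/U - F0)"
    using r by (simp add: field_simps power2_eq_square)
  have le: "-x * F x / (1 + x\<^sup>2/r) \<le> f x"
  proof (cases "x < 0")
    case True
    have h: "F x \<le> (1+x\<^sup>2/r)*f x/(-x)" by (rule F_upper_neg[OF True])
    have "F x * (-x) \<le> (1+x\<^sup>2/r)*f x" using h True by (subst (asm) pos_le_divide_eq) auto
    then have "-x * F x \<le> (1 + x\<^sup>2/r) * f x" by (simp add: mult.commute)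
    then show ?thesis by (subst pos_divide_le_eq[OF u_pos]) (simp add: mult.commute)
  next
    case False
    then have "-x * F x \<le> 0" using F_pos[of x] by (simp add: mult_nonpos_nonneg)
    then have "-x * F x / (1 + x\<^sup>2/r) \<le> 0" using u_pos[of x] by (simp add: divide_nonpos_pos)
    then show ?thesis using f_pos[of x] by simp
  qed
  have "(r+1)/r * f x * (-x * F x/(1 + x\<^sup>2/r) - f x) \<le> 0"
    using le r f_pos[of x] by (intro mult_nonneg_nonpos) auto
  then show "(-1/r - 1) * (f x)\<^sup>2 + F x * fd x \<le> 0"
    unfolding fd_def using g[OF u_pos[of x], of "f x" "F x"] by simp
qed

lemma key_le: "F x * (1 - F x) * \<bar>x\<bar> \<le> (1 + x\<^sup>2/r) * f x"
proof -
  have F1: "F x \<le> 1" "F x \<ge> 0" "1 - F x \<ge> 0" using G_pos[of x] F_pos[of x] by auto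
  have uf: "(1 + x\<^sup>2/r) * f x > 0" using u_pos[of x] f_pos[of x] by simp
  consider "x > 0" | "x = 0" | "x < 0" by linarith
  then show ?thesis
  proof cases
    case 1
    have a: "(1 - F x) * x \<le> (1 + x\<^sup>2/r) * f x"
      using G_upper[OF 1] 1 by (subst (asm) pos_le_divide_eq) auto
    have b: "0 \<le> (1 - F x) * x" using F1 1 by simp
    have "F x * ((1 - F x) * x) \<le> 1 * ((1 + x\<^sup>2/r) * f x)"
      by (rule mult_mono[OF F1(1) a]) (use b in auto)
    then show ?thesis using 1 by (simp add: mult.assoc)
  next
    case 2 then show ?thesis using uf by simp
  next
    case 3
    have a: "F x * (-x) \<le> (1+x\<^sup>2/r)*f x" using F_upper_neg[OF 3] 3 by (subst (asm) pos_le_divide_eq) auto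
    have b: "0 \<le> F x * (-x)" using F1 3 by (simp add: mult_nonneg_nonpos)
    have c: "1 - F x \<le> 1" using F1 by simp
    have "(1 - F x) * (F x * (-x)) \<le> 1 * ((1 + x\<^sup>2/r) * f x)"
      by (rule mult_mono[OF c a]) (use b in auto)
    then show ?thesis using 3 by (simp add: algebra_simps)
  qed
qed

lemma E_eq: "F x * (1 - F x) * \<bar>deriv f x\<bar> / (f x)\<^sup>2
    = (1 + 1/r) * (F x * (1 - F x) * \<bar>x\<bar>) / ((1 + x\<^sup>2/r) * f x)"
proof -
  have a: "\<bar>deriv f x\<bar> = (r+1)/r * \<bar>x\<bar> / (1 + x\<^sup>2/r) * f x"
    unfolding deriv_f fd_def using r u_pos[of x] f_pos[of x] by (simp add: abs_mult abs_divide)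
  have g: "\<And>U F0 P. U > 0 \<Longrightarrow> F0 > 0 \<Longrightarrow> P * ((r+1)/r * \<bar>x\<bar> / U * F0) / F0\<^sup>2 = (1 + 1/r) * (P * \<bar>x\<bar>) / (U * F0)"
    using r by (simp add: field_simps power2_eq_square)
  show ?thesis unfolding a by (rule g[OF u_pos f_pos])
qed

lemma E_le: "F x * (1 - F x) * \<bar>deriv f x\<bar> / (f x)\<^sup>2 \<le> 1 + 1/r"
proof -
  have uf: "(1 + x\<^sup>2/r) * f x > 0" using u_pos[of x] f_pos[of x] by simp
  have "(F x * (1 - F x) * \<bar>x\<bar>) / ((1 + x\<^sup>2/r) * f x) \<le> 1"
    using key_le[of x] uf by simp
  then have "(1 + 1/r) * ((F x * (1 - F x) * \<bar>x\<bar>) / ((1 + x\<^sup>2/r) * f x)) \<le> (1 + 1/r) * 1"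
    using r by (intro mult_left_mono) auto
  then show ?thesis unfolding E_eq by simp
qed

lemma E_ge: assumes x: "x \<ge> 1"
  shows "(1 + 1/r) * (1 - kk x) * (x\<^sup>2 / (r + x\<^sup>2)) \<le> F x * (1 - F x) * \<bar>deriv f x\<bar> / (f x)\<^sup>2"
proof -
  have uf: "(1 + x\<^sup>2/r) * f x > 0" using u_pos[of x] f_pos[of x] by simp
  have F0: "F x \<ge> 0" using F_pos[of x] by simp
  have Fk: "F x \<ge> 1 - kk x" using G_upper[of x] x by (simp add: kk_def)
  have Gl: "(1 - F x) * x \<ge> x * f x / r * x" using G_lower[OF x] x by (intro mult_right_mono) auto
  have q: "x * f x / r * x \<ge> 0" using x f_pos[of x] r by simp
  have "(1 - kk x) * (x * f x / r * x) \<le> F x * (x * f x / r * x)"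
    using Fk q by (intro mult_right_mono) auto
  also have "\<dots> \<le> F x * ((1 - F x) * x)" using Gl F0 by (intro mult_left_mono) auto
  finally have m: "(1 - kk x) * (x * f x / r * x) \<le> F x * (1 - F x) * \<bar>x\<bar>"
    using x by (simp add: mult.assoc)
  have "(1 - kk x) * (x * f x / r * x) / ((1 + x\<^sup>2/r) * f x) \<le> F x * (1 - F x) * \<bar>x\<bar> / ((1 + x\<^sup>2/r) * f x)"
    using m uf by (intro divide_right_mono) auto
  moreover have "(1 - kk x) * (x * f x / r * x) / ((1 + x\<^sup>2/r) * f x) = (1 - kk x) * (x\<^sup>2 / (r + x\<^sup>2))"
  proof -
    have uu: "1 + x\<^sup>2/r = (r + x\<^sup>2)/r" using r by (simp add: field_simps)
    have S: "r + x\<^sup>2 > 0" using r by (simp add: add_pos_nonneg)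
    have g: "\<And>F0 K S. F0 > 0 \<Longrightarrow> S > 0 \<Longrightarrow> K * (x * F0 / r * x) / ((S/r) * F0) = K * (x\<^sup>2 / S)"
      using r by (simp add: field_simps power2_eq_square)
    show ?thesis unfolding uu by (rule g[OF f_pos S])
  qed
  ultimately have "(1 - kk x) * (x\<^sup>2 / (r + x\<^sup>2)) \<le> F x * (1 - F x) * \<bar>x\<bar> / ((1 + x\<^sup>2/r) * f x)" by simp
  then have "(1 + 1/r) * ((1 - kk x) * (x\<^sup>2 / (r + x\<^sup>2))) \<le> (1 + 1/r) * (F x * (1 - F x) * \<bar>x\<bar> / ((1 + x\<^sup>2/r) * f x))"
    using r by (intro mult_left_mono) auto
  then show ?thesis unfolding E_eq by (simp add: mult.assoc)
qed

lemma gamma_result: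
  "bdd_above (range (\<lambda>x. F x * (1 - F x) * \<bar>deriv f x\<bar> / (f x)\<^sup>2)) \<and>
   gamma_functional F f = 1 + 1/r"
proof -
  let ?E = "\<lambda>x. F x * (1 - F x) * \<bar>deriv f x\<bar> / (f x)\<^sup>2"
  have bdd: "bdd_above (range ?E)" by (rule bdd_aboveI2[where M="1 + 1/r"]) (rule E_le)
  have le: "(SUP x. ?E x) \<le> 1 + 1/r" by (rule cSUP_least) (auto intro: E_le)
  have lim: "((\<lambda>x. (1 + 1/r) * (1 - kk x) * (x\<^sup>2 / (r + x\<^sup>2))) \<longlongrightarrow> (1 + 1/r) * (1 - 0) * 1) at_top"
  proof (intro tendsto_intros kk_lim)
    show "((\<lambda>x. x\<^sup>2 / (r + x\<^sup>2)) \<longlongrightarrow> 1) at_top" using r by real_asymp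
  qed
  have lim': "((\<lambda>x. (1 + 1/r) * (1 - kk x) * (x\<^sup>2 / (r + x\<^sup>2))) \<longlongrightarrow> 1 + 1/r) at_top"
    using lim by simp
  have ge: "1 + 1/r \<le> (SUP x. ?E x)"
  proof (rule tendsto_le[OF _ tendsto_const lim'])
    show "at_top \<noteq> (bot :: real filter)" by simp
    show "\<forall>\<^sub>F x in at_top. (1 + 1/r) * (1 - kk x) * (x\<^sup>2 / (r + x\<^sup>2)) \<le> (SUP x. ?E x)"
      using eventually_ge_at_top[of 1]
    proof eventually_elim
      case (elim x)
      have "(1 + 1/r) * (1 - kk x) * (x\<^sup>2 / (r + x\<^sup>2)) \<le> ?E x" by (rule E_ge[OF elim])
      also have "\<dots> \<le> (SUP x. ?E x)" by (rule cSUP_upper[OF _ bdd]) simp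
      finally show ?case .
    qed
  qed
  show ?thesis using bdd le ge unfolding gamma_functional_def by simp
qed

end

theorem mainTheorem5:
  fixes r :: real
  assumes "r > 0"
  shows "convex_on UNIV (\<lambda>x. student_t_cdf r x powr (-1 / r)) \<and>
         convex_on UNIV (\<lambda>x. (1 - student_t_cdf r x) powr (-1 / r)) \<and>
         bdd_above (range (\<lambda>x. student_t_cdf r x * (1 - student_t_cdf r x)
                   * \<bar>deriv (student_t_density r) x\<bar> / (student_t_density r x)\<^sup>2)) \<and>
         gamma_functional (student_t_cdf r) (student_t_density r) = 1 + 1 / r"
  using convex_F[OF assms] convex_G[OF assms] gamma_result[OF assms] by simp

end
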